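(* Fix $d\ge 1$, a Lipschitz constant $G>0$, a horizon $T\in\mathbb{N}_+$ and a feature sequence $h_{1:T}=(h_1,\ldots,h_T)$ with $h_t\in\mathbb{R}^d$, $\|h_t\|_2\le 1$ for all $t$ and $\sum_{t=1}^T\|h_t\|_2^2\ge 1$. Let $\varepsilon>0$. Run the single-feature learner described in the context (with 1D FreeGrad with hyperparameter $\varepsilon$ and Lipschitz constant $G$ as subroutine). Then there is a poly-logarithmic function $\mathrm{polylog}(\cdot,\cdot,\cdot)$ (not depending on $T$, the comparator, or the environment) such that for every comparator sequence $u_{1:T}=(u_1,\ldots,u_T)\in\mathbb{R}^{dT}$ lying in $\mathrm{span}(h_{1:T})$ (i.e. $u_t=\hat u\, h_t$ for all $t$, for some $\hat u\in\mathbb{R}$), $$\mathrm{Reg}_T(u_{1:T})\le \varepsilon G+\|u_{1:T}\|_2\, G\cdot \mathrm{polylog}\Big(\max_t\|u_t\|_2,\,T,\,\varepsilon^{-1}\Big),$$ where $\|u_{1:T}\|_2=(\sum_{t=1}^T\|u_t\|_2^2)^{1/2}$.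
   Context: Online convex optimization game: in each round $t=1,2,\ldots$ the player picks $x_t\in\mathbb{R}^d$ based on past observations; an adversarial environment then reveals a convex loss $l_t:\mathbb{R}^d\to\mathbb{R}$ that is $G$-Lipschitz w.r.t. $\|\cdot\|_2$ (possibly depending on $x_1,\ldots,x_t$), and the player suffers $l_t(x_t)$ and observes a subgradient $g_t\in\partial l_t(x_t)$ (so $\|g_t\|_2\le G$). For a comparator sequence $u_1,\ldots,u_T\in\mathbb{R}^d$, the unconstrained dynamic regret is $\mathrm{Reg}_T(u_{1:T})=\sup_{\text{environments}}\big[\sum_{t=1}^T l_t(x_t)-\sum_{t=1}^T l_t(u_t)\big]$. FreeGrad (dimension $k$, hyperparameter $\varepsilon>0$, Lipschitz constant $\hat G>0$): initialize $s=0\in\mathbb{R}^k$, $v=\hat G^2$; each round predict $\hat x=-\varepsilon s\cdot\frac{(2v+\hat G\|s\|_2)\hat G^2}{2(v+\hat G\|s\|_2)^2\sqrt v}\exp\!\big(\frac{\|s\|_2^2}{2v+2\hat G\|s\|_2}\big)$, then observe a gradient $\hat g$ (with $\|\hat g\|_2\le\hat G$) and update $s\leftarrow s+\hat g$, $v\leftarrow v+\|\hat g\|_2^2$. Single-feature learner: in round $t$, receive $h_t$; if $h_t\neq 0$, query the 1D FreeGrad subroutine $\mathcal{A}$ (hyperparameter $\varepsilon$, $\hat G=G$) for its output $\hat x_t\in\mathbb{R}$ (otherwise $\hat x_t$ is arbitrary); predict $x_t=\hat x_t h_t$; receive $g_t$; if $h_t\ne 0$, send $\hat g_t=\langle g_t,h_t\rangle$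 to $\mathcal{A}$ as its gradient. *)

theory Defs
  imports "HOL-Analysis.Analysis"
begin

definition freegrad_pred :: "real \<Rightarrow> real \<Rightarrow> 'k::real_normed_vector \<Rightarrow> real \<Rightarrow> 'k" where
  "freegrad_pred eps Gh s v =
     (- eps * ((2 * v + Gh * norm s) * Gh\<^sup>2) / (2 * (v + Gh * norm s)\<^sup>2 * sqrt v)
        * exp ((norm s)\<^sup>2 / (2 * v + 2 * Gh * norm s))) *\<^sub>R s"

text \<open>Run of the single-feature learner (1D FreeGrad subroutine, hyperparameter eps,
  Lipschitz constant G) against an adaptive environment whose subgradient at round t
  is Gr t [x_1,...,x_t].  State after n rounds: (s, v, [x_1,...,x_n]).
  If h_t = 0 the subroutine output is irrelevant since x_t = xhat_t * h_t = 0.\<close>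
primrec sfl_state :: "real \<Rightarrow> real \<Rightarrow> (nat \<Rightarrow> 'a::euclidean_space)
    \<Rightarrow> (nat \<Rightarrow> 'a list \<Rightarrow> 'a) \<Rightarrow> nat \<Rightarrow> real \<times> real \<times> 'a list" where
  "sfl_state eps G h Gr 0 = (0, G\<^sup>2, [])"
| "sfl_state eps G h Gr (Suc n) =
     (case sfl_state eps G h Gr n of (s, v, xs) \<Rightarrow>
        (let t = Suc n;
             xhat = (if h t \<noteq> 0 then freegrad_pred eps G s v else 0);
             xs' = xs @ [xhat *\<^sub>R h t];
             gh = Gr t xs' \<bullet> h t
         in if h t \<noteq> 0 then (s + gh, v + gh\<^sup>2, xs') else (s, v, xs')))"

text \<open>Predictions x_1,...,x_T (x_t is the (t-1)-th list entry).\<close>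
definition sfl_preds :: "real \<Rightarrow> real \<Rightarrow> (nat \<Rightarrow> 'a::euclidean_space)
    \<Rightarrow> (nat \<Rightarrow> 'a list \<Rightarrow> 'a) \<Rightarrow> nat \<Rightarrow> 'a list" where
  "sfl_preds eps G h Gr T = snd (snd (sfl_state eps G h Gr T))"

text \<open>Admissible adaptive environment: in round t, given the history [x_1,...,x_t],
  it reveals a convex G-Lipschitz loss L t hist and a subgradient Gr t hist of it at x_t.\<close>
definition valid_env :: "real \<Rightarrow> nat \<Rightarrow> (nat \<Rightarrow> 'a list \<Rightarrow> 'a::euclidean_space \<Rightarrow> real)
    \<Rightarrow> (nat \<Rightarrow> 'a list \<Rightarrow> 'a) \<Rightarrow> bool" where
  "valid_env G T L Gr \<longleftrightarrow>
     (\<forall>t\<in>{1..T}. \<forall>hs. length hs = t \<longrightarrow>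
        convex_on UNIV (L t hs) \<and> G-lipschitz_on UNIV (L t hs) \<and>
        (\<forall>y. L t hs y \<ge> L t hs (last hs) + Gr t hs \<bullet> (y - last hs)))"

definition polylog3 :: "(real \<Rightarrow> real \<Rightarrow> real \<Rightarrow> real) \<Rightarrow> bool" where
  "polylog3 P \<longleftrightarrow> (\<exists>C (k::nat). \<forall>x y z. x \<ge> 0 \<longrightarrow> y \<ge> 0 \<longrightarrow> z \<ge> 0 \<longrightarrow>
      \<bar>P x y z\<bar> \<le> C * (ln (exp 1 + x + y + z)) ^ k)"

end

theory Submission
  imports Defs
begin

lemma case1_poly:
  fixes s v t :: real assumes "s \<ge> 0" "v \<ge> 0" "t \<ge> 0" "t \<le> 1"
  shows "0 \<le> 8*(v+s)^4*(v+t^2+s+t)* t^2 + (2* v+t^2)*(v+t^2+s+t)*(4* t* s*(2* v+s)*(v+s)^2 - t^2* s^2*(2* v+s)^2) - (2* v+t^2)*(4*(v+s)^4*(s+t)^2 - 4*(v+s)^3* s^2*(v+t^2+s+t))"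
proof -
  define u where "u = 1 - t"
  have u0: "u \<ge> 0" unfolding u_def using assms by simp
  have "8*(v+s)^4*(v+t^2+s+t)* t^2 + (2* v+t^2)*(v+t^2+s+t)*(4* t* s*(2* v+s)*(v+s)^2 - t^2* s^2*(2* v+s)^2) - (2* v+t^2)*(4*(v+s)^4*(s+t)^2 - 4*(v+s)^3* s^2*(v+t^2+s+t)) = 8 * v^4 * t^3 * u + 12 * v^4 * t^4 + 32 * s * v^3 * t^3 * u^2 + 88 * s * v^3 * t^4 * u + 64 * s * v^3 * t^5 + 24 * s * v^4 * t^2 * u + 40 * s * v^4 * t^3 + 48 * s^2 * v^2 * t^3 * u^3 + 188 * s^2 * v^2 * t^4 * u^2 + 248 * s^2 * v^2 * t^5 * u + 104 * s^2 * v^2 * t^6 + 72 * s^2 * v^3 * t^2 * u^2 + 176 * s^2 * v^3 * t^3 * u + 96 * s^2 * v^3 * t^4 + 32 * s^3 * v * t^3 * u^3 + 128 * s^3 * v * t^4 * u^2 + 172 * s^3 * v * t^5 * u + 72 * s^3 * v * t^6 + 80 * s^3 * v^2 * t^2 * u^2 + 184 * s^3 * v^2 * t^3 * u + 100 * s^3 * v^2 * t^4 + 8 * s^3 * v^3 * t^2 + 8 * s^4 * t^3 * u^3 + 32 * s^4 * t^4 * u^2 + 43 * s^4 * t^5 * u + 18 * s^4 * t^6 + 40 * s^4 * v * t^2 * u^2 + 86 * s^4 * v * t^3 * u + 51 * s^4 * v * t^4 + 14 * s^4 * v^2 * t^2 + 8 * s^5 * t^2 * u^2 + 16 * s^5 *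 t^3 * u + 11 * s^5 * t^4 + 6 * s^5 * v * t^2"
    unfolding u_def by algebra
  also have "0 \<le> 8 * v^4 * t^3 * u + 12 * v^4 * t^4 + 32 * s * v^3 * t^3 * u^2 + 88 * s * v^3 * t^4 * u + 64 * s * v^3 * t^5 + 24 * s * v^4 * t^2 * u + 40 * s * v^4 * t^3 + 48 * s^2 * v^2 * t^3 * u^3 + 188 * s^2 * v^2 * t^4 * u^2 + 248 * s^2 * v^2 * t^5 * u + 104 * s^2 * v^2 * t^6 + 72 * s^2 * v^3 * t^2 * u^2 + 176 * s^2 * v^3 * t^3 * u + 96 * s^2 * v^3 * t^4 + 32 * s^3 * v * t^3 * u^3 + 128 * s^3 * v * t^4 * u^2 + 172 * s^3 * v * t^5 * u + 72 * s^3 * v * t^6 + 80 * s^3 * v^2 * t^2 * u^2 + 184 * s^3 * v^2 * t^3 * u + 100 * s^3 * v^2 * t^4 + 8 * s^3 * v^3 * t^2 + 8 * s^4 * t^3 * u^3 + 32 * s^4 * t^4 * u^2 + 43 * s^4 * t^5 * u + 18 * s^4 * t^6 + 40 * s^4 * v * t^2 * u^2 + 86 * s^4 * v * t^3 * u + 51 * s^4 * v * t^4 + 14 * s^4 * v^2 * t^2 + 8 * s^5 * t^2 * u^2 + 16 * s^5 * t^3 * u + 11 * s^5 * t^4 + 6 * s^5 * v * t^2"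
    using assms u0 by (intro add_nonneg_nonneg mult_nonneg_nonneg zero_le_power; simp)
  finally show ?thesis by simp
qed
lemma case2_poly:
  fixes s v t :: real assumes "s \<ge> t" "v \<ge> 0" "t \<ge> 0" "t \<le> 1"
  shows "0 \<le> 4*(v+s)^2*(2*(v+s)^2 - t* s*(2* v+s))*(v+t^2+s-t)* t^2 - 2* t* s*(2* v+s)*(2*(v+s)^2 - t* s*(2* v+s))*(2* v+t^2)*(v+t^2+s-t) - t^2* s^2*(2* v+s)^2*(2* v+t^2)*(v+t^2+s-t) - (2*(v+s)^2*(2*(v+s)^2 - t* s*(2* v+s))*(2* v+t^2)*(s-t)^2 - 2*(v+s)*(2*(v+s)^2 - t* s*(2* v+s))*(2* v+t^2)*(v+t^2+s-t)* s^2)"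
proof -
  define u where "u = 1 - t"
  have u0: "u \<ge> 0" unfolding u_def using assms by simp
  define p where "p = s - t"
  have p0: "p \<ge> 0" unfolding p_def using assms by simp
  have "4*(v+s)^2*(2*(v+s)^2 - t* s*(2* v+s))*(v+t^2+s-t)* t^2 - 2* t* s*(2* v+s)*(2*(v+s)^2 - t* s*(2* v+s))*(2* v+t^2)*(v+t^2+s-t) - t^2* s^2*(2* v+s)^2*(2* v+t^2)*(v+t^2+s-t) - (2*(v+s)^2*(2*(v+s)^2 - t* s*(2* v+s))*(2* v+t^2)*(s-t)^2 - 2*(v+s)*(2*(v+s)^2 - t* s*(2* v+s))*(2* v+t^2)*(v+t^2+s-t)* s^2) = 8 * t^8 * u^2 + 12 * t^9 * u + 3 * t^10 + 8 * v * t^6 * u^3 + 52 * v * t^7 * u^2 + 57 * v * t^8 * u + 11 * v * t^9 + 32 * v^2 * t^5 * u^2 + 82 * v^2 * t^6 * u + 16 * v^2 * t^7 + 40 * v^3 * t^4 * u^2 + 64 * v^3 * t^5 * u + 12 * v^3 * t^6 + 16 * v^4 * t^3 * u + 4 * v^4 * t^4 + 8 * p * t^6 * u^3 + 52 * p * t^7 * u^2 + 67 * p * t^8 * u + 17 * p * t^9 + 64 * p * v * t^5 * u^3 + 262 * p * v * t^6 * u^2 + 264 * p * v * t^7 * u + 54 * p * v * t^8 + 144 * p * v^2 * t^4 * u^3 + 436 * p * v^2 * t^5 * u^2 + 360 * p * v^2 * t^6 * u + 64 * p * v^2 * t^7 + 112 * p * v^3 * t^3 * u^2 + 168 * p * v^3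 * t^4 * u + 36 * p * v^3 * t^5 + 24 * p * v^4 * t^2 * u + 8 * p * v^4 * t^3 + 32 * p^2 * t^5 * u^3 + 128 * p^2 * t^6 * u^2 + 148 * p^2 * t^7 * u + 38 * p^2 * t^8 + 144 * p^2 * v * t^4 * u^3 + 480 * p^2 * v * t^5 * u^2 + 458 * p^2 * v * t^6 * u + 98 * p^2 * v * t^7 + 192 * p^2 * v^2 * t^3 * u^3 + 544 * p^2 * v^2 * t^4 * u^2 + 442 * p^2 * v^2 * t^5 * u + 82 * p^2 * v^2 * t^6 + 72 * p^2 * v^3 * t^2 * u^2 + 112 * p^2 * v^3 * t^3 * u + 24 * p^2 * v^3 * t^4 + 48 * p^3 * t^4 * u^3 + 152 * p^3 * t^5 * u^2 + 162 * p^3 * t^6 * u + 42 * p^3 * t^7 + 128 * p^3 * v * t^3 * u^3 + 388 * p^3 * v * t^4 * u^2 + 360 * p^3 * v * t^5 * u + 80 * p^3 * v * t^6 + 80 * p^3 * v^2 * t^2 * u^3 + 236 * p^3 * v^2 * t^3 * u^2 + 196 * p^3 * v^2 * t^4 * u + 36 * p^3 * v^2 * t^5 + 8 * p^3 * v^3 * t^2 * u + 32 * p^4 * t^3 * u^3 + 88 * p^4 * t^4 * u^2 + 88 * p^4 * t^5 * u + 23 * p^4 * t^6 + 40 * p^4 * v * t^2 * u^3 + 124 * p^4 * v * t^3 * u^2 + 117 * p^4 * v * t^4 * u + 27 * p^4 * v * t^5 + 14 * p^4 * v^2 * t^2 * u + 2 * p^4 * v^2 * t^3 + 8 * p^5 *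 t^2 * u^3 + 20 * p^5 * t^3 * u^2 + 19 * p^5 * t^4 * u + 5 * p^5 * t^5 + 6 * p^5 * v * t^2 * u + 2 * p^5 * v * t^3"
    unfolding u_def p_def by algebra
  also have "0 \<le> 8 * t^8 * u^2 + 12 * t^9 * u + 3 * t^10 + 8 * v * t^6 * u^3 + 52 * v * t^7 * u^2 + 57 * v * t^8 * u + 11 * v * t^9 + 32 * v^2 * t^5 * u^2 + 82 * v^2 * t^6 * u + 16 * v^2 * t^7 + 40 * v^3 * t^4 * u^2 + 64 * v^3 * t^5 * u + 12 * v^3 * t^6 + 16 * v^4 * t^3 * u + 4 * v^4 * t^4 + 8 * p * t^6 * u^3 + 52 * p * t^7 * u^2 + 67 * p * t^8 * u + 17 * p * t^9 + 64 * p * v * t^5 * u^3 + 262 * p * v * t^6 * u^2 + 264 * p * v * t^7 * u + 54 * p * v * t^8 + 144 * p * v^2 * t^4 * u^3 + 436 * p * v^2 * t^5 * u^2 + 360 * p * v^2 * t^6 * u + 64 * p * v^2 * t^7 + 112 * p * v^3 * t^3 * u^2 + 168 * p * v^3 * t^4 * u + 36 * p * v^3 * t^5 + 24 * p * v^4 * t^2 * u + 8 * p * v^4 * t^3 + 32 * p^2 * t^5 * u^3 + 128 * p^2 * t^6 * u^2 + 148 * p^2 * t^7 * u + 38 * p^2 * t^8 + 144 * p^2 * v * t^4 * u^3 + 480 * p^2 * v * t^5 * u^2 + 458 * p^2 * v * t^6 * u + 98 * p^2 * v * t^7 + 192 * p^2 * v^2 * t^3 * u^3 + 544 * p^2 *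 v^2 * t^4 * u^2 + 442 * p^2 * v^2 * t^5 * u + 82 * p^2 * v^2 * t^6 + 72 * p^2 * v^3 * t^2 * u^2 + 112 * p^2 * v^3 * t^3 * u + 24 * p^2 * v^3 * t^4 + 48 * p^3 * t^4 * u^3 + 152 * p^3 * t^5 * u^2 + 162 * p^3 * t^6 * u + 42 * p^3 * t^7 + 128 * p^3 * v * t^3 * u^3 + 388 * p^3 * v * t^4 * u^2 + 360 * p^3 * v * t^5 * u + 80 * p^3 * v * t^6 + 80 * p^3 * v^2 * t^2 * u^3 + 236 * p^3 * v^2 * t^3 * u^2 + 196 * p^3 * v^2 * t^4 * u + 36 * p^3 * v^2 * t^5 + 8 * p^3 * v^3 * t^2 * u + 32 * p^4 * t^3 * u^3 + 88 * p^4 * t^4 * u^2 + 88 * p^4 * t^5 * u + 23 * p^4 * t^6 + 40 * p^4 * v * t^2 * u^3 + 124 * p^4 * v * t^3 * u^2 + 117 * p^4 * v * t^4 * u + 27 * p^4 * v * t^5 + 14 * p^4 * v^2 * t^2 * u + 2 * p^4 * v^2 * t^3 + 8 * p^5 * t^2 * u^3 + 20 * p^5 * t^3 * u^2 + 19 * p^5 * t^4 * u + 5 * p^5 * t^5 + 6 * p^5 * v * t^2 * u + 2 * p^5 * v * t^3"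
    using assms u0 p0 by (intro add_nonneg_nonneg mult_nonneg_nonneg zero_le_power; simp)
  finally show ?thesis by simp
qed
lemma case3_poly:
  fixes s v t :: real assumes "s \<ge> 0" "v \<ge> 0" "s \<le> t" "t \<le> 1"
  shows "0 \<le> 4*(v+s)^2*(2*(v+s)^2 - t* s*(2* v+s))*(v+t^2+t-s)* t^2 - 2* t* s*(2* v+s)*(2*(v+s)^2 - t* s*(2* v+s))*(2* v+t^2)*(v+t^2+t-s) - t^2* s^2*(2* v+s)^2*(2* v+t^2)*(v+t^2+t-s) - (2*(v+s)^2*(2*(v+s)^2 - t* s*(2* v+s))*(2* v+t^2)*(s-t)^2 - 2*(v+s)*(2*(v+s)^2 - t* s*(2* v+s))*(2* v+t^2)*(v+t^2+t-s)* s^2)"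
proof -
  define u where "u = 1 - t"
  have u0: "u \<ge> 0" unfolding u_def using assms by simp
  define p where "p = t - s"
  have p0: "p \<ge> 0" unfolding p_def using assms by simp
  have "4*(v+s)^2*(2*(v+s)^2 - t* s*(2* v+s))*(v+t^2+t-s)* t^2 - 2* t* s*(2* v+s)*(2*(v+s)^2 - t* s*(2* v+s))*(2* v+t^2)*(v+t^2+t-s) - t^2* s^2*(2* v+s)^2*(2* v+t^2)*(v+t^2+t-s) - (2*(v+s)^2*(2*(v+s)^2 - t* s*(2* v+s))*(2* v+t^2)*(s-t)^2 - 2*(v+s)*(2*(v+s)^2 - t* s*(2* v+s))*(2* v+t^2)*(v+t^2+t-s)* s^2) = 8 * s^4 * p^3 * u^3 + 20 * s^4 * p^4 * u^2 + 11 * s^4 * p^5 * u + 16 * s^5 * p^2 * u^3 + 76 * s^5 * p^3 * u^2 + 68 * s^5 * p^4 * u + 7 * s^5 * p^5 + 8 * s^6 * p * u^3 + 100 * s^6 * p^2 * u^2 + 150 * s^6 * p^3 * u + 31 * s^6 * p^4 + 52 * s^7 * p * u^2 + 152 * s^7 * p^2 * u + 54 * s^7 * p^3 + 8 * s^8 * u^2 + 71 * s^8 * p * u + 46 * s^8 * p^2 + 12 * s^9 * u + 19 * s^9 * p + 3 * s^10 + 32 * v * s^3 * p^3 * u^3 + 80 * v * s^3 * p^4 * u^2 + 44 * v * s^3 * p^5 * u + 56 * v * s^4 * p^2 * u^3 + 266 * v * s^4 * p^3 * u^2 + 221 * v * s^4 * p^4 * u + 9 * v * s^4 * p^5 + 48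 * v * s^5 * p * u^3 + 384 * v * s^5 * p^2 * u^2 + 488 * v * s^5 * p^3 * u + 55 * v * s^5 * p^4 + 8 * v * s^6 * u^3 + 250 * v * s^6 * p * u^2 + 546 * v * s^6 * p^2 * u + 122 * v * s^6 * p^3 + 52 * v * s^7 * u^2 + 292 * v * s^7 * p * u + 126 * v * s^7 * p^2 + 57 * v * s^8 * u + 61 * v * s^8 * p + 11 * v * s^9 + 48 * v^2 * s^2 * p^3 * u^3 + 128 * v^2 * s^2 * p^4 * u^2 + 86 * v^2 * s^2 * p^5 * u + 10 * v^2 * s^2 * p^6 + 64 * v^2 * s^3 * p^2 * u^3 + 332 * v^2 * s^3 * p^3 * u^2 + 306 * v^2 * s^3 * p^4 * u + 32 * v^2 * s^3 * p^5 + 96 * v^2 * s^4 * p * u^3 + 514 * v^2 * s^4 * p^2 * u^2 + 596 * v^2 * s^4 * p^3 * u + 68 * v^2 * s^4 * p^4 + 32 * v^2 * s^5 * u^3 + 424 * v^2 * s^5 * p * u^2 + 716 * v^2 * s^5 * p^2 * u + 128 * v^2 * s^5 * p^3 + 114 * v^2 * s^6 * u^2 + 438 * v^2 * s^6 * p * u + 146 * v^2 * s^6 * p^2 + 98 * v^2 * s^7 * u + 80 * v^2 * s^7 * p + 16 * v^2 * s^8 + 32 * v^3 * s * p^3 * u^2 + 64 * v^3 * s * p^4 * u + 20 * v^3 * s * p^5 + 24 * v^3 * s^2 * p^2 * u^2 + 112 * v^3 * s^2 * p^3 * u + 36 * v^3 * s^2 * p^4 + 80 * v^3 * s^3 * p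 * u^2 + 176 * v^3 * s^3 * p^2 * u + 32 * v^3 * s^3 * p^3 + 40 * v^3 * s^4 * u^2 + 192 * v^3 * s^4 * p * u + 48 * v^3 * s^4 * p^2 + 64 * v^3 * s^5 * u + 44 * v^3 * s^5 * p + 12 * v^3 * s^6 + 8 * v^4 * p^3 * u + 12 * v^4 * p^4 + 8 * v^4 * s * p^3 + 24 * v^4 * s^2 * p * u + 16 * v^4 * s^3 * u + 8 * v^4 * s^3 * p + 4 * v^4 * s^4"
    unfolding u_def p_def by algebra
  also have "0 \<le> 8 * s^4 * p^3 * u^3 + 20 * s^4 * p^4 * u^2 + 11 * s^4 * p^5 * u + 16 * s^5 * p^2 * u^3 + 76 * s^5 * p^3 * u^2 + 68 * s^5 * p^4 * u + 7 * s^5 * p^5 + 8 * s^6 * p * u^3 + 100 * s^6 * p^2 * u^2 + 150 * s^6 * p^3 * u + 31 * s^6 * p^4 + 52 * s^7 * p * u^2 + 152 * s^7 * p^2 * u + 54 * s^7 * p^3 + 8 * s^8 * u^2 + 71 * s^8 * p * u + 46 * s^8 * p^2 + 12 * s^9 * u + 19 * s^9 * p + 3 * s^10 + 32 * v * s^3 * p^3 * u^3 + 80 * v * s^3 * p^4 * u^2 + 44 * v * s^3 * p^5 * u + 56 * v * s^4 * p^2 * u^3 + 266 * v * s^4 * p^3 * u^2 + 221 * v * s^4 * p^4 * u + 9 * v * s^4 * p^5 + 48 * v * s^5 * p * u^3 + 384 * v * s^5 * p^2 * u^2 + 488 * v * s^5 * p^3 * u + 55 * v * s^5 * p^4 + 8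 * v * s^6 * u^3 + 250 * v * s^6 * p * u^2 + 546 * v * s^6 * p^2 * u + 122 * v * s^6 * p^3 + 52 * v * s^7 * u^2 + 292 * v * s^7 * p * u + 126 * v * s^7 * p^2 + 57 * v * s^8 * u + 61 * v * s^8 * p + 11 * v * s^9 + 48 * v^2 * s^2 * p^3 * u^3 + 128 * v^2 * s^2 * p^4 * u^2 + 86 * v^2 * s^2 * p^5 * u + 10 * v^2 * s^2 * p^6 + 64 * v^2 * s^3 * p^2 * u^3 + 332 * v^2 * s^3 * p^3 * u^2 + 306 * v^2 * s^3 * p^4 * u + 32 * v^2 * s^3 * p^5 + 96 * v^2 * s^4 * p * u^3 + 514 * v^2 * s^4 * p^2 * u^2 + 596 * v^2 * s^4 * p^3 * u + 68 * v^2 * s^4 * p^4 + 32 * v^2 * s^5 * u^3 + 424 * v^2 * s^5 * p * u^2 + 716 * v^2 * s^5 * p^2 * u + 128 * v^2 * s^5 * p^3 + 114 * v^2 * s^6 * u^2 + 438 * v^2 * s^6 * p * u + 146 * v^2 * s^6 * p^2 + 98 * v^2 * s^7 * u + 80 * v^2 * s^7 * p + 16 * v^2 * s^8 + 32 * v^3 * s * p^3 * u^2 + 64 * v^3 * s * p^4 * u + 20 * v^3 * s * p^5 + 24 * v^3 * s^2 * p^2 * u^2 + 112 * v^3 * s^2 * p^3 * u + 36 * v^3 * s^2 * p^4 + 80 * v^3 * s^3 * p * u^2 + 176 * v^3 * s^3 * p^2 * u + 32 * v^3 * s^3 * p^3 + 40 * v^3 * s^4 * u^2 + 192 * v^3 *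 s^4 * p * u + 48 * v^3 * s^4 * p^2 + 64 * v^3 * s^5 * u + 44 * v^3 * s^5 * p + 12 * v^3 * s^6 + 8 * v^4 * p^3 * u + 12 * v^4 * p^4 + 8 * v^4 * s * p^3 + 24 * v^4 * s^2 * p * u + 16 * v^4 * s^3 * u + 8 * v^4 * s^3 * p + 4 * v^4 * s^4"
    using assms u0 p0 by (intro add_nonneg_nonneg mult_nonneg_nonneg zero_le_power; simp)
  finally show ?thesis by simp
qed

lemma case1_rat:
  fixes s v t :: real assumes "s \<ge> 0" "v > 0" "t \<ge> 0" "t \<le> 1"
  shows "(s+t)^2/(2*(v+t^2)+2*(s+t)) - s^2/(2* v+2* s) \<le> t^2/(2* v+t^2) + (t*(s*(2* v+s)/(2*(v+s)^2)) - (t*(s*(2* v+s)/(2*(v+s)^2)))^2/2)"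
proof -
  note N = case1_poly[OF assms(1) less_imp_le[OF assms(2)] assms(3,4)]
  have p1: "v+s > 0" "2* v+t^2 > 0" "v+t^2+s+t > 0" using assms zero_le_power2[of t] by linarith+
  define X where "X = t^2/(2* v+t^2)"
  define Y where "Y = s*(2* v+s)/(2*(v+s)^2)"
  define Z1 where "Z1 = (s+t)^2/(2*(v+t^2)+2*(s+t))"
  define Z2 where "Z2 = s^2/(2* v+2* s)"
  have eX: "X*(2* v+t^2) = t^2" unfolding X_def using p1 by simp
  have eY: "Y*(2*(v+s)^2) = s*(2* v+s)" unfolding Y_def using p1 by simp
  have eZ1: "Z1*(2*(v+t^2)+2*(s+t)) = (s+t)^2" unfolding Z1_def using p1 by simp
  have eZ2: "Z2*(2* v+2* s) = s^2" unfolding Z2_def using p1 by simp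
  define D where "D = 8*(v+s)^4*(2* v+t^2)*(v+t^2+s+t)"
  have Dp: "D > 0" unfolding D_def using p1 by simp
  have "D*(X + (t* Y - (t* Y)^2/2) - (Z1 - Z2)) = 8*(v+s)^4*(v+t^2+s+t)* t^2 + (2* v+t^2)*(v+t^2+s+t)*(4* t* s*(2* v+s)*(v+s)^2 - t^2* s^2*(2* v+s)^2) - (2* v+t^2)*(4*(v+s)^4*(s+t)^2 - 4*(v+s)^3* s^2*(v+t^2+s+t))"
    unfolding D_def using eX eY eZ1 eZ2 by algebra
  with N Dp have "0 \<le> X + (t* Y - (t* Y)^2/2) - (Z1 - Z2)"
    by (metis zero_le_mult_iff not_less)
  then show ?thesis unfolding X_def Y_def Z1_def Z2_def by simp
qed

lemma Y_lt1:
  fixes s v :: real assumes "s \<ge> 0" "v > 0"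
  shows "s*(2* v+s)/(2*(v+s)^2) < 1" "0 \<le> s*(2* v+s)/(2*(v+s)^2)"
proof -
  have "v + s > 0" using assms by linarith
  moreover have "s*(2* v+s) < 2*(v+s)^2" using assms by (simp add: power2_eq_square algebra_simps) (smt (verit) mult_nonneg_nonneg mult_pos_pos)
  ultimately show "s*(2* v+s)/(2*(v+s)^2) < 1" by simp
  show "0 \<le> s*(2* v+s)/(2*(v+s)^2)" using assms by simp
qed

lemma case23_rat:
  fixes s v t :: real assumes "s \<ge> 0" "v > 0" "t \<ge> 0" "t \<le> 1"
  shows "(s-t)^2/(2*(v+t^2)+2*\<bar>s-t\<bar>) - s^2/(2* v+2* s) \<le> t^2/(2* v+t^2) + ((-t)*(s*(2* v+s)/(2*(v+s)^2)) - ((-t)*(s*(2* v+s)/(2*(v+s)^2)))^2/(2*(1+(-t)*(s*(2* v+s)/(2*(v+s)^2)))))"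
proof -
  define Y where "Y = s*(2* v+s)/(2*(v+s)^2)"
  have Y1: "Y < 1" "Y \<ge> 0" unfolding Y_def using Y_lt1 assms by auto
  have "t* Y \<le> 1* Y" by (rule mult_right_mono) (use assms Y1 in auto)
  then have tY: "t* Y < 1" using Y1 by simp
  define Q where "Q = v+t^2+\<bar>s-t\<bar>"
  have p1: "v+s > 0" "2* v+t^2 > 0" "Q > 0" using assms zero_le_power2[of t] unfolding Q_def by linarith+
  define X where "X = t^2/(2* v+t^2)"
  define Z1 where "Z1 = (s-t)^2/(2*(v+t^2)+2*\<bar>s-t\<bar>)"
  define Z2 where "Z2 = s^2/(2* v+2* s)"
  define Z3 where "Z3 = ((-t)* Y)^2/(2*(1+(-t)* Y))"
  have eX: "X*(2* v+t^2) = t^2" unfolding X_def using p1 by simp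
  have eY: "Y*(2*(v+s)^2) = s*(2* v+s)" unfolding Y_def using p1 by simp
  have "2*(v+t^2)+2*\<bar>s-t\<bar> = 2* Q" unfolding Q_def by simp
  then have eZ1: "Z1*(2* Q) = (s-t)^2" unfolding Z1_def using p1 by simp
  have eZ2: "Z2*(2* v+2* s) = s^2" unfolding Z2_def using p1 by simp
  have eZ3: "Z3*(2*(1-t* Y)) = (t* Y)^2" unfolding Z3_def using tY by simp
  define R where "R = 2*(v+s)^2 - t* s*(2* v+s)"
  have "2*(v+s)^2*(1-t* Y) = 2*(v+s)^2 - t*(Y*(2*(v+s)^2))" by algebra
  then have eR: "R = 2*(v+s)^2*(1-t* Y)" unfolding R_def eY by simp
  have Rp: "R > 0" unfolding eR using p1 tY by simp
  define D where "D = 4*(v+s)^2* R*(2* v+t^2)* Q"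
  have Dp: "D > 0" unfolding D_def using p1 Rp by simp
  have key: "D*(X + ((-t)* Y - Z3) - (Z1 - Z2)) = 4*(v+s)^2* R* Q* t^2 - 2* t* s*(2* v+s)* R*(2* v+t^2)* Q - t^2* s^2*(2* v+s)^2*(2* v+t^2)* Q - (2*(v+s)^2* R*(2* v+t^2)*(s-t)^2 - 2*(v+s)* R*(2* v+t^2)* Q* s^2)"
  proof -
    have "D* X = 4*(v+s)^2* R* Q*(X*(2* v+t^2))" unfolding D_def by algebra
    then have h1: "D* X = 4*(v+s)^2* R* Q* t^2" by (simp only: eX)
    have "D*(t* Y) = 2* t*(Y*(2*(v+s)^2))* R*(2* v+t^2)* Q" unfolding D_def by algebra
    then have h2: "D*(t* Y) = 2* t*(s*(2* v+s))* R*(2* v+t^2)* Q" by (simp only: eY)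
    have "D* Z3 = 4*(v+s)^4*(2* v+t^2)* Q*(Z3*(2*(1-t* Y)))" unfolding D_def eR by algebra
    also have "... = 4*(v+s)^4*(2* v+t^2)* Q*((t* Y)^2)" by (simp only: eZ3)
    also have "... = (2* v+t^2)* Q* t^2*(Y*(2*(v+s)^2))^2" by algebra
    also have "... = (2* v+t^2)* Q* t^2*(s*(2* v+s))^2" by (simp only: eY)
    finally have h3: "D* Z3 = (2* v+t^2)* Q* t^2*(s*(2* v+s))^2" .
    have "D* Z1 = 2*(v+s)^2* R*(2* v+t^2)*(Z1*(2* Q))" unfolding D_def by algebra
    then have h4: "D* Z1 = 2*(v+s)^2* R*(2* v+t^2)*(s-t)^2" by (simp only: eZ1)
    have "D* Z2 = 2*(v+s)* R*(2* v+t^2)* Q*(Z2*(2* v+2* s))" unfolding D_def by algebra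
    then have h5: "D* Z2 = 2*(v+s)* R*(2* v+t^2)* Q* s^2" by (simp only: eZ2)
    have "D*(X + ((-t)* Y - Z3) - (Z1 - Z2)) = D* X - D*(t* Y) - D* Z3 - D* Z1 + D* Z2" by algebra
    then show ?thesis unfolding h1 h2 h3 h4 h5 by algebra
  qed
  have N: "0 \<le> 4*(v+s)^2* R* Q* t^2 - 2* t* s*(2* v+s)* R*(2* v+t^2)* Q - t^2* s^2*(2* v+s)^2*(2* v+t^2)* Q - (2*(v+s)^2* R*(2* v+t^2)*(s-t)^2 - 2*(v+s)* R*(2* v+t^2)* Q* s^2)"
  proof (cases "s \<ge> t")
    case True
    then have "Q = v+t^2+s-t" unfolding Q_def by simp
    show ?thesis unfolding R_def \<open>Q = v+t^2+s-t\<close> by (rule case2_poly[OF True less_imp_le[OF assms(2)] assms(3,4)])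
  next
    case False
    then have "Q = v+t^2+t-s" unfolding Q_def by simp
    show ?thesis unfolding R_def \<open>Q = v+t^2+t-s\<close> by (rule case3_poly[OF assms(1) less_imp_le[OF assms(2)] _ assms(4)]) (use False in simp)
  qed
  from key N Dp have "0 \<le> X + ((-t)* Y - Z3) - (Z1 - Z2)"
    by (metis zero_le_mult_iff not_less)
  then have "Z1 - Z2 \<le> X + ((-t)* Y - Z3)" by simp
  then show ?thesis unfolding X_def Y_def Z1_def Z2_def Z3_def .
qed

lemma ln_lb1:
  fixes x :: real assumes "x \<ge> 0" shows "2* x/(2+x) \<le> ln (1+x)"
proof -
  let ?f = "\<lambda>z::real. ln (1+z) - 2* z/(2+z)"
  have "?f 0 \<le> ?f x"
  proof (rule DERIV_nonneg_imp_nondecreasing[OF assms])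
    fix z :: real assume z: "0 \<le> z" "z \<le> x"
    have "DERIV ?f z :> (1/(1+z) - (2*(2+z) - 2* z)/(2+z)^2)"
      using z by (auto intro!: derivative_eq_intros simp: power2_eq_square)
    moreover have "1/(1+z) - (2*(2+z) - 2* z)/(2+z)^2 = z^2/((1+z)*(2+z)^2)"
      using z by (simp add: field_simps) (simp add: algebra_simps power2_eq_square)
    moreover have "z^2/((1+z)*(2+z)^2) \<ge> 0" using z by simp
    ultimately show "\<exists>y. DERIV ?f z :> y \<and> 0 \<le> y" by auto
  qed
  then show ?thesis by simp
qed

lemma ln_lb2:
  fixes y :: real assumes "y \<ge> 0" shows "y - y^2/2 \<le> ln (1+y)"
proof -
  let ?f = "\<lambda>z::real. ln (1+z) - z + z^2/2"
  have "?f 0 \<le> ?f y"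
  proof (rule DERIV_nonneg_imp_nondecreasing[OF assms])
    fix z :: real assume z: "0 \<le> z" "z \<le> y"
    have "DERIV ?f z :> (1/(1+z) - 1 + z)"
      using z by (auto intro!: derivative_eq_intros simp: power2_eq_square)
    moreover have "1/(1+z) - 1 + z = z^2/(1+z)"
      using z by (simp add: field_simps) (simp add: algebra_simps power2_eq_square)
    moreover have "z^2/(1+z) \<ge> 0" using z by simp
    ultimately show "\<exists>y. DERIV ?f z :> y \<and> 0 \<le> y" by auto
  qed
  then show ?thesis by simp
qed

lemma aux3: "(w::real) > 0 \<Longrightarrow> 1/w - 1 + ((2*(w-1))*(2* w) - (w-1)^2*2)/(2* w)^2 = -((w-1)^2/(2* w^2))"
  by (simp add: field_simps power2_eq_square)

lemma ln_lb3:
  fixes y :: real assumes "y \<le> 0" "y > -1" shows "y - y^2/(2*(1+y)) \<le> ln (1+y)"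
proof -
  let ?f = "\<lambda>z::real. ln (1+z) - z + z^2/(2*(1+z))"
  have "?f y \<ge> ?f 0"
  proof (rule DERIV_nonpos_imp_nonincreasing[OF assms(1)])
    fix z :: real assume z: "y \<le> z" "z \<le> 0"
    have "DERIV ?f z :> (1/(1+z) - 1 + ((2* z)*(2*(1+z)) - z^2*2)/(2*(1+z))^2)"
      using z assms by (auto intro!: derivative_eq_intros simp: power2_eq_square)
    moreover have "1/(1+z) - 1 + ((2* z)*(2*(1+z)) - z^2*2)/(2*(1+z))^2 = -(z^2/(2*(1+z)^2))"
      using aux3[of "1+z"] z assms by simp
    moreover have "-(z^2/(2*(1+z)^2)) \<le> 0" using z by simp
    ultimately show "\<exists>y. DERIV ?f z :> y \<and> y \<le> 0" by auto
  qed
  then show ?thesis by simp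
qed

lemma core_pos:
  fixes s v g :: real
  assumes s: "s \<ge> 0" and v: "v > 0" and g: "\<bar>g\<bar> \<le> 1"
  shows "exp ((s+g)^2/(2*(v+g^2)+2*\<bar>s+g\<bar>)) / sqrt (v+g^2)
         \<le> exp (s^2/(2* v+2* s)) / sqrt v * (1 + g*(s*(2* v+s)/(2*(v+s)^2)))"
proof -
  define Y where "Y = s*(2* v+s)/(2*(v+s)^2)"
  have Y1: "Y < 1" "Y \<ge> 0" unfolding Y_def using Y_lt1 s v by auto
  have gY: "g* Y > -1"
  proof -
    have "\<bar>g\<bar>* Y \<le> 1* Y" by (rule mult_right_mono) (use g Y1 in auto)
    moreover have "\<bar>g* Y\<bar> = \<bar>g\<bar>* Y" using Y1 by (simp add: abs_mult)
    ultimately show ?thesis using Y1 by linarith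
  qed
  define X where "X = g^2/(2* v+g^2)"
  define L where "L = (if g \<ge> 0 then g* Y - (g* Y)^2/2 else g* Y - (g* Y)^2/(2*(1+g* Y)))"
  define f0 where "f0 = s^2/(2* v+2* s)"
  define f1 where "f1 = (s+g)^2/(2*(v+g^2)+2*\<bar>s+g\<bar>)"
  have D: "f1 - f0 \<le> X + L"
  proof (cases "g \<ge> 0")
    case True
    then have "\<bar>s+g\<bar> = s+g" using s by simp
    then show ?thesis using case1_rat[OF s v True] g True
      unfolding f1_def f0_def X_def L_def Y_def by simp
  next
    case False
    have "(s-(-g))^2/(2*(v+(-g)^2)+2*\<bar>s-(-g)\<bar>) - s^2/(2* v+2* s) \<le> (-g)^2/(2* v+(-g)^2) + ((-(-g))*(s*(2* v+s)/(2*(v+s)^2)) - ((-(-g))*(s*(2* v+s)/(2*(v+s)^2)))^2/(2*(1+(-(-g))*(s*(2* v+s)/(2*(v+s)^2)))))"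
      by (rule case23_rat[OF s v]) (use False g in auto)
    then show ?thesis using False unfolding f1_def f0_def X_def L_def Y_def by simp
  qed
  have eL: "exp L \<le> 1 + g* Y"
  proof -
    have "L \<le> ln (1 + g* Y)"
    proof (cases "g \<ge> 0")
      case True
      then show ?thesis unfolding L_def using ln_lb2[of "g* Y"] Y1 by simp
    next
      case False
      then have "g* Y \<le> 0" using Y1 by (simp add: mult_nonpos_nonneg)
      then show ?thesis unfolding L_def using ln_lb3[of "g* Y"] gY False by simp
    qed
    then have "exp L \<le> exp (ln (1+g* Y))" by simp
    then show ?thesis using gY by simp
  qed
  have eX: "exp X \<le> sqrt ((v+g^2)/v)"
  proof -
    have "2*(g^2/v)/(2+g^2/v) \<le> ln (1 + g^2/v)" by (rule ln_lb1) (use v in simp)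
    moreover have "2*(g^2/v)/(2+g^2/v) = 2* X" unfolding X_def using v by (simp add: field_simps)
    moreover have "1 + g^2/v = (v+g^2)/v" using v by (simp add: field_simps)
    ultimately have "2* X \<le> ln ((v+g^2)/v)" by simp
    then have "exp (2* X) \<le> (v+g^2)/v" using v
      by (metis exp_le_cancel_iff exp_ln add_pos_nonneg divide_pos_pos zero_le_power2)
    moreover have "exp (2* X) = (exp X)^2" by (simp add: exp_double[symmetric] power2_eq_square mult_exp_exp)
    ultimately have "(exp X)^2 \<le> (v+g^2)/v" by simp
    then show ?thesis using real_le_rsqrt by blast
  qed
  have "exp f1 \<le> exp (f0 + X + L)" using D by simp
  also have "... = exp f0 * exp X * exp L" by (simp add: exp_add)
  also have "... \<le> exp f0 * sqrt ((v+g^2)/v) * (1 + g* Y)"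
    by (intro mult_mono eL eX) (use gY v in \<open>auto intro!: divide_nonneg_pos add_nonneg_nonneg\<close>)
  finally have A: "exp f1 \<le> exp f0 * sqrt ((v+g^2)/v) * (1 + g* Y)" .
  have vg: "v + g^2 > 0" using v by (simp add: add_pos_nonneg)
  have "exp f1 / sqrt (v+g^2) \<le> exp f0 * sqrt ((v+g^2)/v) * (1 + g* Y) / sqrt (v+g^2)"
    using A vg by (simp add: divide_right_mono)
  also have "... = exp f0 / sqrt v * (1 + g* Y)"
    using v vg by (simp add: real_sqrt_divide field_simps)
  finally show ?thesis unfolding f1_def f0_def Y_def .
qed

lemma core_any:
  fixes s v g :: real
  assumes v: "v > 0" and g: "(abs (g)) \<le> 1"
  shows "exp ((s+g)^2/(2*(v+g^2)+2*(abs (s+g)))) / sqrt (v+g^2)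
         \<le> exp (s^2/(2* v+2*(abs (s)))) / sqrt v * (1 + g*(s*(2* v+(abs (s)))/(2*(v+(abs (s)))^2)))"
proof (cases "s \<ge> 0")
  case True
  then show ?thesis using core_pos[OF True v g] by simp
next
  case False
  have "-s \<ge> 0" using False by simp
  from core_pos[OF this v, of "-g"] g False
  have "exp ((-s + -g)^2/(2*(v+(-g)^2)+2*(abs (-s + -g)))) / sqrt (v+(-g)^2)
         \<le> exp ((-s)^2/(2* v+2*(-s))) / sqrt v * (1 + (-g)*((-s)*(2* v+(-s))/(2*(v+(-s))^2)))" by simp
  moreover have "(-s + -g)^2 = (s+g)^2" "(abs (-s + -g)) = (abs (s+g))" "(abs (s)) = -s"
    using False by (auto simp: power2_eq_square algebra_simps)
  ultimately show ?thesis by simp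
qed

lemma canc: "(G::real) \<noteq> 0 \<Longrightarrow> B \<noteq> 0 \<Longrightarrow> q \<noteq> 0 \<Longrightarrow> (G^2* A)* G^2/(2*(G^2* B)^2*(G* q)) = A/(2* B^2* q)/G"
  by (simp add: field_simps power2_eq_square)

definition pot :: "real \<Rightarrow> real \<Rightarrow> real \<Rightarrow> real \<Rightarrow> real" where
  "pot eps G s v = eps * G^2 / sqrt v * exp (s^2/(2* v + 2* G*(abs (s))))"

lemma pot_step:
  fixes eps G s v g :: real
  assumes G: "G > 0" and eps: "eps > 0" and v: "v > 0" and g: "(abs (g)) \<le> G"
  shows "pot eps G (s+g) (v+g^2) + g * freegrad_pred eps G s v \<le> pot eps G s v"
proof -
  define a where "a = s/G"
  define b where "b = v/G^2"
  define c where "c = g/G"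
  have sa: "s = G* a" and vb: "v = G^2* b" and gc: "g = G* c" using G unfolding a_def b_def c_def by auto
  have b: "b > 0" using v G unfolding b_def by simp
  have c: "(abs (c)) \<le> 1" using g G unfolding c_def by (simp add: abs_div divide_le_eq_1)
  have e1: "(s+g)^2/(2*(v+g^2) + 2* G*(abs (s+g))) = (a+c)^2/(2*(b+c^2)+2*(abs (a+c)))"
  proof -
    have sg: "s+g = G*(a+c)" unfolding sa gc by (simp add: algebra_simps)
    have "(s+g)^2 = G^2*(a+c)^2" unfolding sg by (simp add: power_mult_distrib)
    moreover have "2*(v+g^2) + 2* G*(abs (s+g)) = G^2*(2*(b+c^2)+2*(abs (a+c)))"
      unfolding sg unfolding vb gc using G by (simp add: abs_mult power2_eq_square) (simp add: algebra_simps)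
    ultimately show ?thesis using G by simp
  qed
  have e0: "s^2/(2* v + 2* G*(abs (s))) = a^2/(2* b+2*(abs (a)))"
  proof -
    have "s^2 = G^2* a^2" "2* v + 2* G*(abs (s)) = G^2*(2* b+2*(abs (a)))"
      unfolding sa vb using G by (simp_all add: power2_eq_square algebra_simps abs_mult)
    then show ?thesis using G by simp
  qed
  have sq1: "sqrt (v+g^2) = G * sqrt (b+c^2)"
  proof -
    have "v+g^2 = G^2*(b+c^2)" unfolding vb gc by (simp add: power2_eq_square algebra_simps)
    then show ?thesis using G by (simp add: real_sqrt_mult)
  qed
  have sq0: "sqrt v = G * sqrt b" unfolding vb using G by (simp add: real_sqrt_mult)
  have P1: "pot eps G (s+g) (v+g^2) = eps* G * (exp ((a+c)^2/(2*(b+c^2)+2*(abs (a+c)))) / sqrt (b+c^2))"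
    unfolding pot_def e1 sq1 using G by (simp add: power2_eq_square)
  have P0: "pot eps G s v = eps* G * (exp (a^2/(2* b+2*(abs (a)))) / sqrt b)"
    unfolding pot_def e0 sq0 using G by (simp add: power2_eq_square)
  have X: "g * freegrad_pred eps G s v = - (eps* G * (exp (a^2/(2* b+2*(abs a))) / sqrt b * (c*(a*(2* b+(abs a))/(2*(b+(abs a))^2)))))"
  proof -
    have E: "(norm s)^2/(2 * v + 2 * G * norm s) = a^2/(2* b+2*(abs a))" using e0 by simp
    have K: "(2 * v + G * norm s) * G^2 / (2 * (v + G * norm s)^2 * sqrt v) = (2* b+(abs a))/(2*(b+(abs a))^2* sqrt b) / G"
    proof -
      have "2 * v + G * norm s = G^2*(2* b+(abs a))" "v + G * norm s = G^2*(b+(abs a))"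
        unfolding sa vb using G by (simp_all add: power2_eq_square algebra_simps abs_mult)
      moreover have "b + abs a \<noteq> 0" "sqrt b \<noteq> 0" using b by auto
      ultimately show ?thesis unfolding sq0 using G b canc[of G "b + abs a" "sqrt b" "2* b+abs a"] by simp
    qed
    have fp: "freegrad_pred eps G s v = - eps * ((2 * v + G * norm s) * G^2 / (2 * (v + G * norm s)^2 * sqrt v)) * exp ((norm s)^2/(2 * v + 2 * G * norm s)) * s"
      unfolding freegrad_pred_def by simp
    have "g * freegrad_pred eps G s v = g * (- eps * ((2* b+(abs a))/(2*(b+(abs a))^2* sqrt b) / G) * exp (a^2/(2* b+2*(abs a))) * s)"
      unfolding fp K E ..
    also have "... = (G* c) * (- eps * ((2* b+(abs a))/(2*(b+(abs a))^2* sqrt b) / G) * exp (a^2/(2* b+2*(abs a))) * (G* a))"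
      using sa gc by simp
    also have "... = - (eps* G * (exp (a^2/(2* b+2*(abs a))) / sqrt b * (c*(a*(2* b+(abs a))/(2*(b+(abs a))^2)))))"
    proof -
      have "b + abs a \<noteq> 0" "sqrt b \<noteq> 0" "G \<noteq> 0" using b G by auto
      then show ?thesis by (simp add: field_simps)
    qed
    finally show ?thesis .
  qed
  have "exp ((a+c)^2/(2*(b+c^2)+2*(abs (a+c)))) / sqrt (b+c^2)
         \<le> exp (a^2/(2* b+2*(abs (a)))) / sqrt b * (1 + c*(a*(2* b+(abs (a)))/(2*(b+(abs (a)))^2)))"
    by (rule core_any[OF b c])
  then have "eps* G * (exp ((a+c)^2/(2*(b+c^2)+2*(abs (a+c)))) / sqrt (b+c^2))
         \<le> eps* G * (exp (a^2/(2* b+2*(abs (a)))) / sqrt b * (1 + c*(a*(2* b+(abs (a)))/(2*(b+(abs (a)))^2))))"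
    using G eps by (intro mult_left_mono) auto
  then show ?thesis unfolding P1 P0 X by (simp add: algebra_simps)
qed

definition "SS eps G h Gr n = fst (sfl_state eps G h Gr n)"
definition "VV eps G h Gr n = fst (snd (sfl_state eps G h Gr n))"
definition "XS eps G h Gr n = snd (snd (sfl_state eps G h Gr n))"
definition "xh eps G h Gr t = (if h t \<noteq> 0 then freegrad_pred eps G (SS eps G h Gr (t-1)) (VV eps G h Gr (t-1)) else (0::real))"
definition "gg eps G h Gr t = Gr t (XS eps G h Gr t) \<bullet> h t"

lemma state_step:
  fixes h :: "nat \<Rightarrow> 'a::euclidean_space"
  shows "XS eps G h Gr (Suc n) = XS eps G h Gr n @ [xh eps G h Gr (Suc n) *\<^sub>R h (Suc n)]"
    and "SS eps G h Gr (Suc n) = SS eps G h Gr n + gg eps G h Gr (Suc n)"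
    and "VV eps G h Gr (Suc n) = VV eps G h Gr n + (gg eps G h Gr (Suc n))^2"
proof -
  obtain s v xs where st: "sfl_state eps G h Gr n = (s, v, xs)" by (metis prod_cases3)
  have X: "XS eps G h Gr (Suc n) = xs @ [xh eps G h Gr (Suc n) *\<^sub>R h (Suc n)]"
    unfolding XS_def xh_def SS_def VV_def using st by (simp add: Let_def)
  then show "XS eps G h Gr (Suc n) = XS eps G h Gr n @ [xh eps G h Gr (Suc n) *\<^sub>R h (Suc n)]"
    unfolding XS_def using st by simp
  have g: "gg eps G h Gr (Suc n) = Gr (Suc n) (xs @ [xh eps G h Gr (Suc n) *\<^sub>R h (Suc n)]) \<bullet> h (Suc n)"
    unfolding gg_def X ..
  show "SS eps G h Gr (Suc n) = SS eps G h Gr n + gg eps G h Gr (Suc n)"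
    unfolding g unfolding SS_def using st by (simp add: Let_def xh_def SS_def VV_def)
  show "VV eps G h Gr (Suc n) = VV eps G h Gr n + (gg eps G h Gr (Suc n))^2"
    unfolding g unfolding VV_def using st by (simp add: Let_def xh_def SS_def VV_def)
qed

lemma state_zero: "SS eps G h Gr 0 = 0" "VV eps G h Gr 0 = G^2" "XS eps G h Gr 0 = []"
  unfolding SS_def VV_def XS_def by simp_all

lemma XS_length: "length (XS eps G h Gr n) = n"
  by (induction n) (simp_all add: state_step state_zero)

lemma XS_prefix: "n \<le> m \<Longrightarrow> take n (XS eps G h Gr m) = XS eps G h Gr n"
proof (induction m)
  case 0 then show ?case by (simp add: state_zero)
next
  case (Suc m)
  show ?case
  proof (cases "n = Suc m")
    case True then show ?thesis using XS_length by (metis take_all order_refl)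
  next
    case False
    then have "n \<le> m" using Suc by simp
    then show ?thesis using Suc XS_length[of eps G h Gr m] by (simp add: state_step)
  qed
qed

lemma XS_nth: "1 \<le> t \<Longrightarrow> t \<le> m \<Longrightarrow> XS eps G h Gr m ! (t-1) = xh eps G h Gr t *\<^sub>R h t"
proof -
  assume t: "1 \<le> t" "t \<le> m"
  have "take t (XS eps G h Gr m) ! (t-1) = XS eps G h Gr m ! (t-1)" using t by simp
  moreover have "take t (XS eps G h Gr m) = XS eps G h Gr t" using XS_prefix t by simp
  ultimately have "XS eps G h Gr m ! (t-1) = XS eps G h Gr t ! (t-1)" by simp
  also have "... = xh eps G h Gr t *\<^sub>R h t"
  proof -
    obtain k where k: "t = Suc k" using t by (cases t) auto
    show ?thesis unfolding k using XS_length[of eps G h Gr k] by (simp add: state_step nth_append)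
  qed
  finally show ?thesis .
qed

lemma grad_bound:
  assumes "valid_env G T L Gr" "t \<in> {1..T}" "length hs = t"
  shows "norm (Gr t hs) \<le> G"
proof -
  from assms have cv: "G-lipschitz_on UNIV (L t hs)" and sg: "\<And>y. L t hs y \<ge> L t hs (last hs) + Gr t hs \<bullet> (y - last hs)"
    unfolding valid_env_def by auto
  define x where "x = last hs"
  define g where "g = Gr t hs"
  have "L t hs (x + g) \<ge> L t hs x + g \<bullet> g" using sg[of "x+g"] unfolding x_def g_def by simp
  moreover have "dist (L t hs (x+g)) (L t hs x) \<le> G * dist (x+g) x" using lipschitz_onD[OF cv] by auto
  ultimately have "(norm g)^2 \<le> G * norm g" by (simp add: dist_norm power2_norm_eq_inner)
  then have "norm g * norm g \<le> G * norm g" by (simp add: power2_eq_square)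
  moreover have "G \<ge> 0" using lipschitz_on_nonneg[OF cv] .
  ultimately show ?thesis unfolding g_def[symmetric]
    by (cases "norm g = 0") (auto simp: mult_le_cancel_right)
qed

lemma gg_bound:
  fixes h :: "nat \<Rightarrow> 'a::euclidean_space"
  assumes "valid_env G T L Gr" "t \<in> {1..T}"
  shows "\<bar>gg eps G h Gr t\<bar> \<le> G * norm (h t)"
proof -
  have "norm (Gr t (XS eps G h Gr t)) \<le> G" by (rule grad_bound[OF assms]) (simp add: XS_length)
  moreover have "\<bar>gg eps G h Gr t\<bar> \<le> norm (Gr t (XS eps G h Gr t)) * norm (h t)"
    unfolding gg_def by (rule Cauchy_Schwarz_ineq2)
  ultimately show ?thesis by (meson mult_right_mono norm_ge_zero order_trans)
qed

lemma invariant: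
  fixes h :: "nat \<Rightarrow> 'a::euclidean_space"
  assumes G: "G > 0" and eps: "eps > 0" and env: "valid_env G T L Gr"
    and hb: "\<forall>t\<in>{1..T}. norm (h t) \<le> 1"
  shows "n \<le> T \<Longrightarrow> VV eps G h Gr n \<ge> G^2 \<and> VV eps G h Gr n \<le> G^2 + G^2 * (\<Sum>t=1..n. (norm (h t))^2)
     \<and> SS eps G h Gr n = (\<Sum>t=1..n. gg eps G h Gr t)
     \<and> (\<Sum>t=1..n. gg eps G h Gr t * xh eps G h Gr t) + pot eps G (SS eps G h Gr n) (VV eps G h Gr n) \<le> eps * G"
proof (induction n)
  case 0
  have "pot eps G 0 (G^2) = eps * G" unfolding pot_def using G by (simp add: power2_eq_square)
  then show ?case by (simp add: state_zero)
next
  case (Suc n)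
  then have IH: "VV eps G h Gr n \<ge> G^2" "VV eps G h Gr n \<le> G^2 + G^2 * (\<Sum>t=1..n. (norm (h t))^2)"
     "SS eps G h Gr n = (\<Sum>t=1..n. gg eps G h Gr t)"
     "(\<Sum>t=1..n. gg eps G h Gr t * xh eps G h Gr t) + pot eps G (SS eps G h Gr n) (VV eps G h Gr n) \<le> eps * G"
    by auto
  define g where "g = gg eps G h Gr (Suc n)"
  define s where "s = SS eps G h Gr n"
  define v where "v = VV eps G h Gr n"
  have tT: "Suc n \<in> {1..T}" using Suc by simp
  have gb: "\<bar>g\<bar> \<le> G * norm (h (Suc n))" unfolding g_def by (rule gg_bound[OF env tT])
  have hb1: "norm (h (Suc n)) \<le> 1" using hb tT by blast
  have gG: "\<bar>g\<bar> \<le> G" using gb hb1 G by (meson mult_left_le order_trans less_imp_le norm_ge_zero)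
  have g2: "g^2 \<le> G^2 * (norm (h (Suc n)))^2"
  proof -
    have "g^2 = \<bar>g\<bar>^2" by simp
    also have "... \<le> (G * norm (h (Suc n)))^2" by (rule power_mono[OF gb]) simp
    finally show ?thesis by (simp add: power_mult_distrib)
  qed
  have vpos: "v > 0" unfolding v_def using IH(1) G by (meson less_le_trans zero_less_power)
  have step: "pot eps G (s+g) (v+g^2) + g * xh eps G h Gr (Suc n) \<le> pot eps G s v"
  proof (cases "h (Suc n) = 0")
    case True
    then have "g = 0" unfolding g_def gg_def by simp
    then show ?thesis by simp
  next
    case False
    then have "xh eps G h Gr (Suc n) = freegrad_pred eps G s v" unfolding xh_def s_def v_def by simp
    then show ?thesis using pot_step[OF G eps vpos gG] by simp
  qed
  have S: "SS eps G h Gr (Suc n) = s + g" "VV eps G h Gr (Suc n) = v + g^2"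
    unfolding s_def v_def g_def by (simp_all add: state_step)
  show ?case
  proof (intro conjI)
    show "VV eps G h Gr (Suc n) \<ge> G^2" unfolding S using IH(1) unfolding v_def by (smt (verit) zero_le_power2)
    show "VV eps G h Gr (Suc n) \<le> G^2 + G^2 * (\<Sum>t=1..Suc n. (norm (h t))^2)"
      unfolding S using IH(2) g2 unfolding v_def by (simp add: distrib_left)
    show "SS eps G h Gr (Suc n) = (\<Sum>t=1..Suc n. gg eps G h Gr t)"
      unfolding S using IH(3) unfolding s_def g_def by simp
    show "(\<Sum>t=1..Suc n. gg eps G h Gr t * xh eps G h Gr t) + pot eps G (SS eps G h Gr (Suc n)) (VV eps G h Gr (Suc n)) \<le> eps * G"
      unfolding S using IH(4) step unfolding s_def v_def g_def by simp
  qed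
qed

lemma ln_le_sq: "(z::real) > 0 \<Longrightarrow> ln z \<le> z^2/8 + 1"
proof -
  assume z: "z > 0"
  have "ln z \<le> z - 1" using ln_le_minus_one z by simp
  moreover have "z - 1 \<le> z^2/8 + 1"
  proof -
    have "0 \<le> (z-4)^2" by simp
    then show ?thesis by (simp add: power2_eq_square algebra_simps)
  qed
  ultimately show ?thesis by linarith
qed

lemma ln8: "ln (8::real) \<le> 3"
proof -
  have "2 \<le> exp (1::real)" using exp_ge_add_one_self[of 1] by simp
  then have "2^3 \<le> exp (1::real) ^ 3" by (rule power_mono) simp
  also have "... = exp 3" by (simp add: exp_of_nat_mult[symmetric])
  finally have "8 \<le> exp (3::real)" by simp
  then show ?thesis by (metis exp_gt_zero ln_exp ln_le_cancel_iff zero_less_numeral)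
qed

lemma ln_le_lin: "(z::real) > 0 \<Longrightarrow> ln z \<le> z/8 + 2"
proof -
  assume z: "z > 0"
  have "ln z = ln (z/8) + ln 8" using z by (simp add: ln_div)
  moreover have "ln (z/8) \<le> z/8 - 1" using ln_le_minus_one z by simp
  ultimately show ?thesis using ln8 by linarith
qed

lemma conj_bound:
  fixes G eps V H Tr u S M :: real
  assumes G: "G > 0" and eps: "eps > 0" and V1: "G^2 \<le> V" and V2: "V \<le> 2* G^2* H"
    and H1: "1 \<le> H" and HT: "H \<le> Tr" and uM: "\<bar>u\<bar> \<le> M * sqrt Tr" and M0: "M \<ge> 0"
  shows "-(u* S) - pot eps G S V \<le> \<bar>u\<bar> * sqrt H * G * (56 * ln (exp 1 + M + Tr + 1/eps))"
proof -
  define B where "B = exp 1 + M + Tr + 1/eps"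
  define l where "l = ln B"
  have B1: "B \<ge> exp 1" unfolding B_def using M0 HT H1 eps by simp
  have Bpos: "B > 0" using B1 exp_gt_zero[of 1] by linarith
  have "ln (exp 1) \<le> ln B" using B1 Bpos by (subst ln_le_cancel_iff) auto
  then have l1: "l \<ge> 1" unfolding l_def by simp
  have Tr1: "Tr \<ge> 1" using H1 HT by simp
  have MB: "M \<le> B" "Tr \<le> B" "1/eps \<le> B" unfolding B_def using M0 Tr1 eps by (simp_all add: add_nonneg_nonneg)
  have "G^2 > 0" using G by simp
  then have Vpos: "V > 0" using V1 by linarith
  define a where "a = \<bar>S\<bar>"
  define q where "q = S^2/(2* V + 2* G* a)"
  have pot_eq: "pot eps G S V = eps * G^2 / sqrt V * exp q" unfolding pot_def q_def a_def ..
  have RHS0: "0 \<le> \<bar>u\<bar> * sqrt H * G * (56 * l)" using G H1 l1 by simp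
  have uS: "-(u* S) \<le> \<bar>u\<bar> * a"
  proof -
    have "-(u* S) \<le> \<bar>u* S\<bar>" by (rule abs_ge_minus_self)
    then show ?thesis unfolding a_def abs_mult .
  qed
  show ?thesis
  proof (cases "\<bar>u\<bar> * a \<le> pot eps G S V")
    case True
    then show ?thesis using uS RHS0 unfolding l_def B_def by linarith
  next
    case False
    then have lt: "eps * G^2 / sqrt V * exp q < \<bar>u\<bar> * a" unfolding pot_eq by simp
    have potpos: "0 < eps * G^2 / sqrt V * exp q" using eps G Vpos by simp
    have ua: "\<bar>u\<bar> * a > 0" using lt potpos by linarith
    have ann: "a \<ge> 0" unfolding a_def by simp
    have a0: "a > 0" using ua ann by (cases "a = 0") auto
    have u0: "\<bar>u\<bar> > 0" using ua by (cases "u = 0") auto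
    define K where "K = \<bar>u\<bar> * a * sqrt V / (eps * G^2)"
    have Kpos: "K > 0" unfolding K_def using u0 a0 Vpos eps G by simp
    have "exp q < K"
    proof -
      have "exp q * (eps * G^2 / sqrt V) < \<bar>u\<bar> * a" using lt by (simp add: mult.commute)
      then show ?thesis unfolding K_def using eps G Vpos by (simp add: field_simps)
    qed
    then have "ln (exp q) < ln K" using Kpos by (subst ln_less_cancel_iff) auto
    then have qK: "q < ln K" by simp
    have B4: "ln (2 * B^4) \<le> 5 * l"
    proof -
      have "ln (2 * B^4) = ln 2 + 4 * l" unfolding l_def using Bpos by (simp add: ln_mult ln_realpow)
      moreover have "ln (2::real) \<le> 1" using ln_le_minus_one[of 2] by simp
      ultimately show ?thesis using l1 by linarith
    qed
    have sTr: "sqrt Tr \<le> Tr"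
    proof -
      have "sqrt Tr \<ge> 1" using Tr1 by simp
      then have "sqrt Tr * 1 \<le> sqrt Tr * sqrt Tr" by (intro mult_left_mono) auto
      then show ?thesis using Tr1 by simp
    qed
    have uB: "\<bar>u\<bar> \<le> B * B"
    proof -
      have "M * sqrt Tr \<le> B * B" using MB sTr M0 Tr1 by (intro mult_mono) auto
      then show ?thesis using uM by linarith
    qed
    have sH: "sqrt H \<le> H" "sqrt H \<ge> 1"
    proof -
      show "sqrt H \<ge> 1" using H1 by simp
      then have "sqrt H * 1 \<le> sqrt H * sqrt H" by (intro mult_left_mono) auto
      then show "sqrt H \<le> H" using H1 by simp
    qed
    have sV: "sqrt V \<le> 2 * G * sqrt H"
    proof -
      have "sqrt V \<le> sqrt (2* G^2* H)" using V2 by simp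
      also have "... = sqrt 2 * G * sqrt H" using G by (simp add: real_sqrt_mult)
      also have "... \<le> 2 * G * sqrt H"
      proof -
        have "sqrt 2 \<le> sqrt ((2::real)^2)" by (rule real_sqrt_le_mono) simp
        then have "sqrt 2 \<le> (2::real)" by simp
        then show ?thesis using G H1 by (intro mult_right_mono) auto
      qed
      finally show ?thesis .
    qed
    have main: "\<bar>u\<bar> * a \<le> \<bar>u\<bar> * sqrt H * G * (56 * l)"
    proof (cases "G * a \<le> V")
      case True
      define z where "z = a / sqrt V"
      have zpos: "z > 0" unfolding z_def using a0 Vpos by simp
      have az: "a = z * sqrt V" unfolding z_def using Vpos by simp
      define c where "c = \<bar>u\<bar> * V / (eps * G^2)"
      have cpos: "c > 0" unfolding c_def using u0 Vpos eps G by simp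
      have sVV: "sqrt V * sqrt V = V" using Vpos by simp
      have "\<bar>u\<bar> * (z * sqrt V) * sqrt V = (sqrt V * sqrt V) * (z * \<bar>u\<bar>)" by (simp only: ac_simps)
      also have "... = z * (\<bar>u\<bar> * V)" unfolding sVV by (simp only: ac_simps)
      finally have "\<bar>u\<bar> * (z * sqrt V) * sqrt V = z * (\<bar>u\<bar> * V)" .
      then have Kz: "K = z * c" unfolding K_def c_def az by simp
      have "c = \<bar>u\<bar> * (V / G^2) * (1/eps)" unfolding c_def by simp
      also have "... \<le> (B* B) * (2* B) * B"
      proof (intro mult_mono)
        have "V / G^2 \<le> 2* H" using V2 G by (simp add: divide_le_eq algebra_simps)
        then show "V / G^2 \<le> 2* B" using HT MB by linarith
      qed (use uB MB eps Bpos Vpos G in auto)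
      also have "... = 2 * B^4" by (simp add: power4_eq_xxxx)
      finally have c4: "c \<le> 2 * B^4" .
      have "ln c \<le> ln (2 * B^4)" using c4 cpos Bpos by simp
      then have lc: "ln c \<le> 5 * l" using B4 by linarith
      have "q \<ge> z^2/4"
      proof -
        have den: "0 < 2* V + 2* G* a" "2* V + 2* G* a \<le> 4* V" using True Vpos G a0 by (auto intro: add_pos_nonneg)
        have "z^2/4 = S^2/(4* V)" unfolding z_def a_def using Vpos by (simp add: power_divide)
        also have "... \<le> S^2/(2* V + 2* G* a)" using den by (intro divide_left_mono) auto
        finally show ?thesis unfolding q_def .
      qed
      moreover have "ln K = ln z + ln c" unfolding Kz using zpos cpos by (simp add: ln_mult)
      ultimately have "z^2/4 < ln z + 5 * l" using qK lc by linarith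
      then have "z^2/4 < z^2/8 + 1 + 5* l" using ln_le_sq[OF zpos] by linarith
      then have zz: "z^2 < 8 + 40* l" by linarith
      have "l * 1 \<le> l * l" using l1 by (intro mult_left_mono) auto
      moreover have "(7* l)^2 = 49 * (l * l)" by (simp add: power2_eq_square)
      ultimately have "z^2 < (7* l)^2" using zz l1 by linarith
      then have z7: "z < 7* l" by (rule power2_less_imp_less) (use l1 in linarith)
      have m1: "\<bar>u\<bar> * z \<le> \<bar>u\<bar> * (7* l)" using z7 by (intro mult_left_mono) auto
      have m2: "\<bar>u\<bar> * z * sqrt V \<le> \<bar>u\<bar> * (7* l) * (2 * G * sqrt H)"
        by (rule mult_mono[OF m1 sV]) (use u0 l1 Vpos in auto)
      define X where "X = \<bar>u\<bar> * sqrt H * G * l"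
      have X0: "X \<ge> 0" unfolding X_def using u0 G l1 H1 by simp
      have e1: "\<bar>u\<bar> * (7* l) * (2 * G * sqrt H) = 14 * X" unfolding X_def by (simp add: ac_simps)
      have e2: "\<bar>u\<bar> * sqrt H * G * (56 * l) = 56 * X" unfolding X_def by (simp add: ac_simps)
      have "\<bar>u\<bar> * a = \<bar>u\<bar> * z * sqrt V" unfolding az by (simp only: ac_simps)
      also have "... \<le> \<bar>u\<bar> * (7* l) * (2 * G * sqrt H)" by (rule m2)
      also have "... = 14 * X" by (rule e1)
      also have "... \<le> 56 * X" using X0 by simp
      also have "... = \<bar>u\<bar> * sqrt H * G * (56 * l)" by (rule e2[symmetric])
      finally show ?thesis .
    next
      case False
      define z where "z = a / G"
      have zpos: "z > 0" unfolding z_def using a0 G by simp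
      have az: "a = z * G" unfolding z_def using G by simp
      define c where "c = \<bar>u\<bar> * sqrt V / (eps * G)"
      have cpos: "c > 0" unfolding c_def using u0 Vpos eps G by simp
      have n1: "\<bar>u\<bar> * (z * G) * sqrt V = G * (z * (\<bar>u\<bar> * sqrt V))" by (simp only: ac_simps)
      have n2: "eps * G^2 = G * (eps * G)" by (simp add: power2_eq_square ac_simps)
      have Kz: "K = z * c" unfolding K_def c_def az n1 n2 using G by simp
      have "c = \<bar>u\<bar> * (sqrt V / G) * (1/eps)" unfolding c_def by simp
      also have "... \<le> (B* B) * (2* B) * B"
      proof (intro mult_mono)
        have "sqrt V / G \<le> 2 * sqrt H" using sV G by (simp add: pos_divide_le_eq ac_simps)
        then show "sqrt V / G \<le> 2* B" using sH HT MB by linarith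
      qed (use uB MB eps Bpos Vpos G in auto)
      also have "... = 2 * B^4" by (simp add: power4_eq_xxxx)
      finally have c4: "c \<le> 2 * B^4" .
      have "ln c \<le> ln (2 * B^4)" using c4 cpos Bpos by simp
      then have lc: "ln c \<le> 5 * l" using B4 by linarith
      have "q \<ge> z/4"
      proof -
        have den: "0 < 2* V + 2* G* a" "2* V + 2* G* a \<le> 4* G* a" using False Vpos G a0 by (auto intro: add_pos_nonneg)
        have S2: "S^2 = a* a" unfolding a_def by (simp add: power2_eq_square)
        have "a* a/(4* G* a) = a/(4* G)" using a0 by simp
        then have "z/4 = S^2/(4* G* a)" unfolding S2 z_def by simp
        also have "... \<le> S^2/(2* V + 2* G* a)" using den by (intro divide_left_mono) auto
        finally show ?thesis unfolding q_def .
      qed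
      moreover have "ln K = ln z + ln c" unfolding Kz using zpos cpos by (simp add: ln_mult)
      ultimately have "z/4 < ln z + 5 * l" using qK lc by linarith
      then have "z/4 < z/8 + 2 + 5* l" using ln_le_lin[OF zpos] by linarith
      then have z56: "z \<le> 56* l" using l1 by linarith
      have "\<bar>u\<bar> * a = \<bar>u\<bar> * G * z" unfolding az by simp
      also have "... \<le> \<bar>u\<bar> * G * (56* l)" using z56 u0 G by (intro mult_left_mono) auto
      also have "... \<le> \<bar>u\<bar> * G * (56* l) * sqrt H"
      proof -
        have "\<bar>u\<bar> * G * (56* l) * 1 \<le> \<bar>u\<bar> * G * (56* l) * sqrt H" using sH u0 G l1 by (intro mult_left_mono) auto
        then show ?thesis by simp
      qed
      also have "... = \<bar>u\<bar> * sqrt H * G * (56 * l)" by (simp only: ac_simps)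
      finally show ?thesis .
    qed
    show ?thesis using main uS potpos pot_eq unfolding l_def B_def by linarith
  qed
qed

theorem lemma1:
  shows "\<exists>P. polylog3 P \<and>
    (\<forall>(G::real) (eps::real) (T::nat) (h::nat \<Rightarrow> 'a::euclidean_space)
       (L::nat \<Rightarrow> 'a list \<Rightarrow> 'a \<Rightarrow> real) (Gr::nat \<Rightarrow> 'a list \<Rightarrow> 'a) (uh::real).
       G > 0 \<longrightarrow> eps > 0 \<longrightarrow> T \<ge> 1 \<longrightarrow>
       (\<forall>t\<in>{1..T}. norm (h t) \<le> 1) \<longrightarrow>
       (\<Sum>t=1..T. (norm (h t))\<^sup>2) \<ge> 1 \<longrightarrow>
       valid_env G T L Gr \<longrightarrow>
       (let xs = sfl_preds eps G h Gr T; u = (\<lambda>t. uh *\<^sub>R h t) in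
        (\<Sum>t=1..T. L t (take t xs) (xs ! (t - 1)) - L t (take t xs) (u t))
          \<le> eps * G + sqrt (\<Sum>t=1..T. (norm (u t))\<^sup>2) * G *
               P (Max ((\<lambda>t. norm (u t)) ` {1..T})) (real T) (1 / eps)))"
proof (intro exI conjI allI impI)
  define P where "P = (\<lambda>x y z::real. 56 * ln (exp 1 + x + y + z))"
  show "polylog3 P" unfolding polylog3_def P_def
  proof (intro exI allI impI)
    fix x y z :: real assume "0 \<le> x" "0 \<le> y" "0 \<le> z"
    then have "exp 1 + x + y + z \<ge> 1" using exp_ge_add_one_self[of 1] by linarith
    then have "ln (exp 1 + x + y + z) \<ge> 0" by simp
    then show "\<bar>56 * ln (exp 1 + x + y + z)\<bar> \<le> 56 * ln (exp 1 + x + y + z) ^ 1" by simp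
  qed
  fix G eps :: real and T :: nat and h :: "nat \<Rightarrow> 'a::euclidean_space"
    and L :: "nat \<Rightarrow> 'a list \<Rightarrow> 'a \<Rightarrow> real" and Gr :: "nat \<Rightarrow> 'a list \<Rightarrow> 'a" and uh :: real
  assume G: "G > 0" and eps: "eps > 0" and T1: "T \<ge> 1" and hb: "\<forall>t\<in>{1..T}. norm (h t) \<le> 1"
    and H1: "(\<Sum>t=1..T. (norm (h t))\<^sup>2) \<ge> 1" and env: "valid_env G T L Gr"
  define xs where "xs = sfl_preds eps G h Gr T"
  define u where "u = (\<lambda>t. uh *\<^sub>R h t)"
  define H where "H = (\<Sum>t=1..T. (norm (h t))\<^sup>2)"
  define M where "M = Max ((\<lambda>t. norm (u t)) ` {1..T})"
  define S where "S = SS eps G h Gr T"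
  define V where "V = VV eps G h Gr T"
  have xsX: "xs = XS eps G h Gr T" unfolding xs_def sfl_preds_def XS_def ..
  note inv = invariant[OF G eps env hb order_refl]
  have per: "L t (take t xs) (xs ! (t - 1)) - L t (take t xs) (u t) \<le> (xh eps G h Gr t - uh) * gg eps G h Gr t"
    if t: "t \<in> {1..T}" for t
  proof -
    have tk: "take t xs = XS eps G h Gr t" unfolding xsX using t by (simp add: XS_prefix)
    have nth: "xs ! (t-1) = xh eps G h Gr t *\<^sub>R h t" unfolding xsX using t by (intro XS_nth) auto
    have lst: "last (take t xs) = xs ! (t-1)"
    proof -
      have len: "length (take t xs) = t" unfolding tk by (simp add: XS_length)
      then have "take t xs \<noteq> []" using t by auto
      then have "last (take t xs) = take t xs ! (t-1)" using len by (simp add: last_conv_nth)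
      then show ?thesis using t by simp
    qed
    have "length (take t xs) = t" unfolding tk by (simp add: XS_length)
    then have sg: "L t (take t xs) (u t) \<ge> L t (take t xs) (xs ! (t-1)) + Gr t (take t xs) \<bullet> (u t - xs ! (t-1))"
      using env t unfolding valid_env_def lst[symmetric] by blast
    have "Gr t (take t xs) \<bullet> (u t - xs ! (t-1)) = (uh - xh eps G h Gr t) * gg eps G h Gr t"
      unfolding nth u_def tk gg_def by (simp add: inner_diff_right algebra_simps)
    then show ?thesis using sg by (simp add: algebra_simps)
  qed
  have "(\<Sum>t=1..T. L t (take t xs) (xs ! (t - 1)) - L t (take t xs) (u t))
      \<le> (\<Sum>t=1..T. (xh eps G h Gr t - uh) * gg eps G h Gr t)"
    by (rule sum_mono) (rule per)
  also have "... = (\<Sum>t=1..T. gg eps G h Gr t * xh eps G h Gr t) - uh * S"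
    using inv unfolding S_def by (simp add: algebra_simps sum_subtractf sum_distrib_left)
  also have "... \<le> eps * G - pot eps G S V - uh * S" using inv unfolding S_def V_def by linarith
  finally have reg: "(\<Sum>t=1..T. L t (take t xs) (xs ! (t - 1)) - L t (take t xs) (u t)) \<le> eps * G + (-(uh * S) - pot eps G S V)"
    by linarith
  have HT: "H \<le> real T"
  proof -
    have "H \<le> (\<Sum>t=1..T. 1)" unfolding H_def
      by (rule sum_mono) (use hb in \<open>auto intro: power_le_one\<close>)
    then show ?thesis by simp
  qed
  have Hge: "H \<ge> 1" unfolding H_def using H1 .
  have Mge: "norm (u t) \<le> M" if "t \<in> {1..T}" for t unfolding M_def using that by (intro Max_ge) auto
  have M0: "M \<ge> 0" using Mge[of 1] T1 by (meson atLeastAtMost_iff le_refl norm_ge_zero order_trans)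
  have sumu: "(\<Sum>t=1..T. (norm (u t))\<^sup>2) = uh^2 * H"
    unfolding u_def H_def by (simp add: sum_distrib_left power_mult_distrib)
  have uM: "\<bar>uh\<bar> \<le> M * sqrt (real T)"
  proof -
    have "(\<Sum>t=1..T. (norm (u t))\<^sup>2) \<le> (\<Sum>t=1..T. M^2)"
      by (rule sum_mono) (use Mge in \<open>auto intro: power_mono\<close>)
    then have "uh^2 * H \<le> real T * M^2" unfolding sumu by simp
    moreover have "uh^2 \<le> uh^2 * H" using Hge by (simp add: mult_le_cancel_left1)
    ultimately have "uh^2 \<le> M^2 * real T" by (simp add: mult.commute)
    then have "uh^2 \<le> (M * sqrt (real T))^2" by (simp add: power_mult_distrib)
    then show ?thesis using M0 by (metis abs_le_square_iff abs_of_nonneg mult_nonneg_nonneg real_sqrt_ge_zero of_nat_0_le_iff)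
  qed
  have V1: "G^2 \<le> V" using inv unfolding V_def by simp
  have V2: "V \<le> 2 * G^2 * H"
  proof -
    have "V \<le> G^2 + G^2 * H" using inv unfolding V_def H_def by simp
    moreover have "G^2 \<le> G^2 * H" using Hge G by simp
    ultimately show ?thesis by simp
  qed
  have cb: "-(uh * S) - pot eps G S V \<le> \<bar>uh\<bar> * sqrt H * G * (56 * ln (exp 1 + M + real T + 1/eps))"
    by (rule conj_bound[OF G eps V1 V2 Hge HT uM M0])
  have "sqrt (\<Sum>t=1..T. (norm (u t))\<^sup>2) = \<bar>uh\<bar> * sqrt H" unfolding sumu by (simp add: real_sqrt_mult)
  then have "\<bar>uh\<bar> * sqrt H * G * (56 * ln (exp 1 + M + real T + 1/eps)) = sqrt (\<Sum>t=1..T. (norm (u t))\<^sup>2) * G * P M (real T) (1/eps)"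
    unfolding P_def by simp
  then show "let xs = sfl_preds eps G h Gr T; u = (\<lambda>t. uh *\<^sub>R h t) in
        (\<Sum>t=1..T. L t (take t xs) (xs ! (t - 1)) - L t (take t xs) (u t))
          \<le> eps * G + sqrt (\<Sum>t=1..T. (norm (u t))\<^sup>2) * G *
               P (Max ((\<lambda>t. norm (u t)) ` {1..T})) (real T) (1 / eps)"
    using reg cb unfolding Let_def xs_def[symmetric] u_def[symmetric] M_def[symmetric] by linarith
qed

end
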